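(* Let $k\ge2$ and $\ell\ge1$. If $Z'_k(\ell)$ has a strictly decreasing palindromic subsequence of length $d$ with no zero terms, then $Z'_k(\ell+2)$ has a strictly decreasing palindromic subsequence of length $kd+k-1$ with no zero terms.
   Context: For integers $k\ge2$, $L\ge1$ and $0\le x<k^L$, $\mathrm{rev}_{k,L}(x)$ is the integer whose $L$-digit (zero-padded) base-$k$ representation is the reversal of that of $x$. $Z'_k(L)$ denotes the sequence $\mathrm{rev}_{k,L}(0),\mathrm{rev}_{k,L}(1),\dots,\mathrm{rev}_{k,L}(k^L-1)$ (the radix-$k$ digit-reversal permutation; it is the stable configuration $Z_k(L)$ of labeled chip-firing on the directed $k$-ary tree with $1$ subtracted from each entry). A sequence $b_1,\dots,b_d$ of integers in $\{0,\dots,k^L-1\}$ is palindromic (with respect to $k$ and $L$) if $\mathrm{rev}_{k,L}(b_i)=b_{d+1-i}$ for all $i$. *)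

theory Defs
  imports Main "HOL-Library.Sublist"
begin

text \<open>Radix-k digit reversal of the L-digit (zero-padded) base-k representation of x.
  Digit i of x (from the least significant end) is (x div k^i) mod k; it moves to
  position L-1-i.\<close>
definition rev_digits :: "nat \<Rightarrow> nat \<Rightarrow> nat \<Rightarrow> nat" where
  "rev_digits k L x = (\<Sum>i<L. ((x div k ^ i) mod k) * k ^ (L - 1 - i))"

definition Zprime :: "nat \<Rightarrow> nat \<Rightarrow> nat list" where
  "Zprime k L = map (rev_digits k L) [0..<k ^ L]"

definition palindromic :: "nat \<Rightarrow> nat \<Rightarrow> nat list \<Rightarrow> bool" where
  "palindromic k L b \<longleftrightarrow> (\<forall>i < length b. rev_digits k L (b ! i) = b ! (length b - 1 - i))"

end

theory Submission
  imports Defs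
begin



lemma rev_Suc: "rev_digits k (Suc L) x = (x mod k) * k^L + rev_digits k L (x div k)"
  unfolding rev_digits_def
  by (subst sum.lessThan_Suc_shift) (simp add: div_mult2_eq mult.commute)

lemma rev_Suc2: "rev_digits k (Suc L) x = rev_digits k L x * k + (x div k^L) mod k"
proof -
  have "(\<Sum>i<L. x div k ^ i mod k * k ^ (Suc L - 1 - i)) = (\<Sum>i<L. x div k ^ i mod k * k ^ (L - 1 - i) * k)"
  proof (rule sum.cong)
    fix i assume "i \<in> {..<L}"
    then have "Suc L - 1 - i = Suc (L - 1 - i)" by auto
    then show "x div k ^ i mod k * k ^ (Suc L - 1 - i) = x div k ^ i mod k * k ^ (L - 1 - i) * k"
      by (simp add: power_Suc mult.commute mult.left_commute)
  qed simp
  then show ?thesis unfolding rev_digits_def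
    by (simp add: sum_distrib_right)
qed


lemma rev_bound: "k > 0 \<Longrightarrow> rev_digits k L x < k^L"
proof (induction L arbitrary: x)
  case 0 then show ?case by (simp add: rev_digits_def)
next
  case (Suc L)
  have "x mod k + 1 \<le> k" using Suc.prems by (simp add: Suc_le_eq)
  then have "(x mod k + 1) * k^L \<le> k * k^L" by (rule mult_right_mono) simp
  moreover have "rev_digits k L (x div k) < k^L" using Suc by blast
  ultimately have "(x mod k) * k^L + rev_digits k L (x div k) < k * k^L" by (simp add: add_mult_distrib)
  then show ?case by (simp only: rev_Suc power_Suc)
qed

lemma rev_zero[simp]: "rev_digits k L 0 = 0"
  by (simp add: rev_digits_def)

lemma rev_add: assumes "k > 0" shows "rev_digits k L (x + k^L*m) = rev_digits k L x"
  unfolding rev_digits_def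
proof (rule sum.cong)
  fix i assume "i \<in> {..<L}"
  then have "L = i + Suc (L - i - 1)" by auto
  then obtain j where j: "L = i + Suc j" by blast
  have e: "k^L*m = (k^Suc j * m) * k^i" unfolding j power_add by (simp only: mult_ac)
  have "(x + k^L*m) div k^i = (x + (k^Suc j * m) * k^i) div k^i" by (simp only: e)
  also have "... = k^Suc j * m + x div k^i" by (rule div_mult_self1) (use assms in simp)
  finally have "(x + k^L*m) div k^i = x div k^i + k^Suc j * m" by simp
  moreover have "(x div k^i + k^Suc j * m) mod k = x div k^i mod k"
    by (simp only: power_Suc mult.assoc mod_mult_self2)
  ultimately show "(x + k ^ L * m) div k ^ i mod k * k ^ (L - 1 - i) = x div k ^ i mod k * k ^ (L - 1 - i)"
    by simp
qed simp

lemma rev_g: assumes "k > 0" "a < k" "e < k" "y < k^l"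
  shows "rev_digits k (l+2) ((a*k^l + y)*k + e) = (e*k^l + rev_digits k l y)*k + a"
proof -
  have "rev_digits k (l+2) ((a*k^l + y)*k + e) = e * k^(Suc l) + rev_digits k (Suc l) (a*k^l + y)"
    using assms by (simp add: rev_Suc)
  also have "rev_digits k (Suc l) (a*k^l + y) = rev_digits k l (a*k^l+y) * k + a"
    using assms by (simp add: rev_Suc2)
  also have "rev_digits k l (a*k^l+y) = rev_digits k l y"
    using rev_add[OF assms(1), of l y a] by (simp add: add.commute mult.commute)
  finally show ?thesis by (simp add: algebra_simps)
qed

lemma lex_lt: assumes "y < (K::nat)" "a < a'" shows "a*K + y < a'*K + y'"
proof -
  have "a*K + y < a*K + K" using assms by simp
  also have "... = Suc a * K" by simp
  also have "... \<le> a'*K" using assms by (intro mult_right_mono) auto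
  finally show ?thesis by simp
qed

lemma lex_less: assumes "y < K" "y' < K"
  shows "(a*K + y < a'*K + (y'::nat)) \<longleftrightarrow> (a < a' \<or> a = a' \<and> y < y')"
  using lex_lt[OF assms(1), of a a' y'] lex_lt[OF assms(2), of a' a y]
  by (cases a a' rule: linorder_cases) auto


lemma g_less: assumes "z < (K::nat)" "z' < K" "e < k" "e' < k"
  shows "((a*K + z)*k + e < (a'*K + z')*k + e') \<longleftrightarrow> (a < a' \<or> a = a' \<and> (z < z' \<or> z = z' \<and> e < e'))"
proof -
  have p: "(a*K + z < a'*K + z') \<longleftrightarrow> (a < a' \<or> a = a' \<and> z < z')" using lex_less assms by blast
  have p': "(a'*K + z' < a*K + z) \<longleftrightarrow> (a' < a \<or> a' = a \<and> z' < z)" using lex_less assms by blast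
  have "((a*K + z)*k + e < (a'*K + z')*k + e') \<longleftrightarrow>
     (a*K + z < a'*K + z' \<or> a*K + z = a'*K + z' \<and> e < e')"
    using lex_less[of e k e' "a*K+z" "a'*K+z'"] assms by (simp add: mult.commute)
  also have "(a*K + z = a'*K + z') \<longleftrightarrow> (a = a' \<and> z = z')"
  proof -
    have "(a*K + z = a'*K + z') \<longleftrightarrow> \<not>(a*K+z < a'*K+z') \<and> \<not>(a'*K+z' < a*K+z)" by auto
    then show ?thesis using p p' by auto
  qed
  finally show ?thesis using p by auto
qed

lemma g_bound: assumes "a < k" "z < (K::nat)" "e < k"
  shows "(a*K + z)*k + e < K*k*k"
proof -
  have "a*K + z < k*K" using lex_lt[OF assms(2) assms(1), of 0] by simp
  then have "a*K + z < K*k" by (simp add: mult.commute)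
  then show ?thesis using lex_lt[OF assms(3), of "a*K+z" "K*k" 0] by simp
qed

lemma pal_set:
  fixes F :: "nat \<Rightarrow> nat"
  assumes fin: "finite S" and cl: "\<forall>x\<in>S. F x \<in> S"
    and rv: "\<forall>x\<in>S. \<forall>y\<in>S. x < y \<longrightarrow> F y < F x"
  shows "map F (rev (sorted_list_of_set S)) = sorted_list_of_set S"
proof -
  let ?s = "sorted_list_of_set S"
  have inj: "inj_on F S" unfolding inj_on_def using rv by (metis linorder_neqE_nat less_irrefl)
  have "F ` S \<subseteq> S" using cl by auto
  moreover have "card (F ` S) = card S" using inj by (simp add: card_image)
  ultimately have img: "F ` S = S" using fin card_subset_eq by blast
  have ss: "sorted_wrt (<) ?s" by (rule strict_sorted_list_of_set)
  have st: "set ?s = S" using fin by simp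
  have key: "\<forall>i j. i < j \<longrightarrow> j < length ?s \<longrightarrow> F (?s ! j) < F (?s ! i)"
  proof (intro allI impI)
    fix i j assume ij: "i < j" "j < length ?s"
    then have "?s ! i \<in> S" "?s ! j \<in> S" using st nth_mem by (metis less_trans)+
    moreover have "?s ! i < ?s ! j" using ss ij by (simp add: sorted_wrt_iff_nth_less)
    ultimately show "F (?s ! j) < F (?s ! i)" using rv by blast
  qed
  have "sorted_wrt (\<lambda>x y. F y < F x) ?s" using key by (simp add: sorted_wrt_iff_nth_less)
  then have "sorted_wrt (<) (rev (map F ?s))" by (simp add: sorted_wrt_rev sorted_wrt_map)
  then have "sorted_wrt (<) (map F (rev ?s))" by (simp add: rev_map)
  moreover have "set (map F (rev ?s)) = S" using st img by simp
  moreover have "length (map F (rev ?s)) = card S" using fin by simp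
  ultimately show ?thesis using sorted_list_of_set_unique[OF fin] by metis
qed



lemma g_eq: assumes "z < (K::nat)" "z' < K" "e < k" "e' < k"
  shows "((a*K + z)*k + e = (a'*K + z')*k + e') \<longleftrightarrow> (a = a' \<and> z = z' \<and> e = e')"
proof -
  have "((a*K + z)*k + e = (a'*K + z')*k + e') \<longleftrightarrow>
     \<not>((a*K + z)*k + e < (a'*K + z')*k + e') \<and> \<not>((a'*K + z')*k + e' < (a*K + z)*k + e)" by auto
  also have "... \<longleftrightarrow> (a = a' \<and> z = z' \<and> e = e')"
    unfolding g_less[OF assms] g_less[OF assms(2,1,4,3)] by auto
  finally show ?thesis .
qed

theorem proposition7p2:
  fixes k l d :: nat and b :: "nat list"
  assumes "k \<ge> 2" and "l \<ge> 1"
    and "subseq b (Zprime k l)"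
    and "length b = d"
    and "sorted_wrt (>) b"
    and "palindromic k l b"
    and "0 \<notin> set b"
  shows "\<exists>c. subseq c (Zprime k (l + 2)) \<and> length c = k * d + k - 1
             \<and> sorted_wrt (>) c \<and> palindromic k (l + 2) c \<and> 0 \<notin> set c"
proof -
  define K where "K = k^l"
  define f where "f = rev_digits k l"
  define F where "F = rev_digits k (l+2)"
  define g where "g = (\<lambda>a y e. (a*K + y)*k + e)"
  define B where "B = set b"
  have k0: "k > 0" using assms(1) by simp
  have K0: "K > 0" using k0 by (simp add: K_def)
  have Kpow: "k^(l+2) = K*k*k" by (simp add: K_def power_add power2_eq_square mult.assoc)
  have Bbound: "\<forall>y\<in>B. y < K"
  proof
    fix y assume "y \<in> B"
    then have "y \<in> set b" using B_def by simp
    then obtain z where "z \<in> set (Zprime k l)" "y = z" using list_emb_set[OF assms(3)] by blast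
    then show "y < K" using rev_bound[OF k0] by (auto simp: Zprime_def K_def)
  qed
  have "sorted_wrt (<) (rev b)" using assms(5) by (simp add: sorted_wrt_rev)
  then have dist: "distinct b" by (simp add: strict_sorted_iff)
  have cardB: "card B = d" using distinct_card[OF dist] assms(4) B_def by simp
  have pal: "\<And>i. i < length b \<Longrightarrow> f (b ! i) = b ! (length b - 1 - i)"
    using assms(6) unfolding palindromic_def f_def by blast
  have Bcl: "\<forall>y\<in>B. f y \<in> B"
  proof
    fix y assume "y \<in> B"
    then obtain i where "i < length b" "b ! i = y" unfolding B_def by (metis in_set_conv_nth)
    then show "f y \<in> B" using pal[of i] B_def by auto
  qed
  have Brv: "\<forall>y\<in>B. \<forall>y'\<in>B. y < y' \<longrightarrow> f y' < f y"
  proof (intro ballI impI)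
    fix y y' assume "y \<in> B" "y' \<in> B" "y < y'"
    then obtain i j where ij: "i < length b" "b ! i = y" "j < length b" "b ! j = y'"
      unfolding B_def by (metis in_set_conv_nth)
    have "j < i"
    proof (rule ccontr)
      assume "\<not> j < i"
      then have "i = j \<or> i < j" by auto
      then show False
      proof
        assume "i = j" then show False using ij \<open>y < y'\<close> by simp
      next
        assume "i < j" then have "b ! i > b ! j" using sorted_wrt_nth_less[OF assms(5)] ij by blast
        then show False using ij \<open>y < y'\<close> by simp
      qed
    qed
    then have "length b - 1 - i < length b - 1 - j" "length b - 1 - j < length b" using ij by auto
    then have "b ! (length b - 1 - i) > b ! (length b - 1 - j)"
      using sorted_wrt_nth_less[OF assms(5)] by blast
    then show "f y' < f y" using pal[OF ij(1)] pal[OF ij(3)] ij(2,4) by simp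
  qed
  have B0: "0 \<notin> B" using assms(7) B_def by simp
  have fB: "\<And>y. y \<in> B \<Longrightarrow> f y \<in> B \<and> f y < K \<and> f y \<noteq> 0 \<and> y < K \<and> y \<noteq> 0"
    using Bcl Bbound B0 by (metis)
  have Fg: "\<And>a z e. a < k \<Longrightarrow> z < K \<Longrightarrow> e < k \<Longrightarrow> F (g a z e) = g e (f z) a"
    unfolding F_def g_def f_def K_def using rev_g[OF k0] by blast
  have gl: "\<And>a z e a' z' e'. z < K \<Longrightarrow> z' < K \<Longrightarrow> e < k \<Longrightarrow> e' < k \<Longrightarrow>
      (g a z e < g a' z' e') \<longleftrightarrow> (a < a' \<or> a = a' \<and> (z < z' \<or> z = z' \<and> e < e'))"
    unfolding g_def by (rule g_less)
  have ge: "\<And>a z e a' z' e'. z < K \<Longrightarrow> z' < K \<Longrightarrow> e < k \<Longrightarrow> e' < k \<Longrightarrow>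
      (g a z e = g a' z' e') \<longleftrightarrow> (a = a' \<and> z = z' \<and> e = e')"
    unfolding g_def by (rule g_eq)
  define S1 where "S1 = (\<lambda>(a,y). g a y (k-1-a)) ` ({..<k} \<times> B)"
  define S2 where "S2 = (\<lambda>a. g (a+1) 0 (k-1-a)) ` {..<k-1}"
  define S where "S = S1 \<union> S2"
  have finS: "finite S" unfolding S_def S1_def S2_def B_def by simp
  have inj1: "inj_on (\<lambda>(a,y). g a y (k-1-a)) ({..<k} \<times> B)"
    unfolding inj_on_def using ge fB k0 by auto
  have inj2: "inj_on (\<lambda>a. g (a+1) 0 (k-1-a)) {..<k-1}"
    unfolding inj_on_def using ge K0 k0 by auto
  have c1: "card S1 = k*d" unfolding S1_def using card_image[OF inj1] cardB
    by (simp add: card_cartesian_product)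
  have c2: "card S2 = k-1" unfolding S2_def using card_image[OF inj2] by simp
  have disj: "S1 \<inter> S2 = {}" unfolding S1_def S2_def using ge fB K0 k0 by fastforce
  have cardS: "card S = k*d + k - 1"
    using card_Un_disjoint[of S1 S2] disj c1 c2 finS k0 unfolding S_def by simp
  have memS: "\<And>x. x \<in> S \<longleftrightarrow> (\<exists>a y. a < k \<and> y \<in> B \<and> x = g a y (k-1-a)) \<or> (\<exists>a. a < k-1 \<and> x = g (a+1) 0 (k-1-a))"
    unfolding S_def S1_def S2_def by auto
  have cl: "\<forall>x\<in>S. F x \<in> S"
  proof
    fix x assume "x \<in> S"
    then consider (A) a y where "a < k" "y \<in> B" "x = g a y (k-1-a)"
      | (C) a where "a < k-1" "x = g (a+1) 0 (k-1-a)" using memS by blast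
    then show "F x \<in> S"
    proof cases
      case A
      then have "F x = g (k-1-a) (f y) (k-1-(k-1-a))" using Fg fB by simp
      moreover have "k-1-a < k" using k0 by simp
      ultimately show ?thesis using memS fB[OF A(2)] by blast
    next
      case C
      then have "F x = g (k-1-a) 0 (a+1)" using Fg K0 f_def by simp
      moreover have "k-1-a = (k-2-a) + 1" "a+1 = k-1-(k-2-a)" "k-2-a < k-1" using C assms(1) by auto
      ultimately show ?thesis using memS by metis
    qed
  qed
  have rv: "\<forall>x\<in>S. \<forall>x'\<in>S. x < x' \<longrightarrow> F x' < F x"
  proof (intro ballI impI)
    fix x x' assume xS: "x \<in> S" and x'S: "x' \<in> S" and lt: "x < x'"
    from xS consider (A) a y where "a < k" "y \<in> B" "x = g a y (k-1-a)"
      | (C) a where "a < k-1" "x = g (a+1) 0 (k-1-a)" using memS by blast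
    then show "F x' < F x"
    proof cases
      case A
      note a = A
      from x'S consider (A') a' y' where "a' < k" "y' \<in> B" "x' = g a' y' (k-1-a')"
        | (C') a' where "a' < k-1" "x' = g (a'+1) 0 (k-1-a')" using memS by blast
      then show ?thesis
      proof cases
        case A'
        have h: "y < y' \<longrightarrow> f y' < f y" using Brv a(2) A'(2) by blast
        show ?thesis using lt a A' Fg fB[OF a(2)] fB[OF A'(2)] gl h k0 by auto
      next
        case C'
        show ?thesis using lt a C' Fg fB[OF a(2)] gl K0 k0 f_def by auto
      qed
    next
      case C
      note a = C
      from x'S consider (A') a' y' where "a' < k" "y' \<in> B" "x' = g a' y' (k-1-a')"
        | (C') a' where "a' < k-1" "x' = g (a'+1) 0 (k-1-a')" using memS by blast
      then show ?thesis
      proof cases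
        case A'
        show ?thesis using lt a A' Fg fB[OF A'(2)] gl K0 k0 f_def by auto
      next
        case C'
        show ?thesis using lt a C' Fg gl K0 k0 f_def by auto
      qed
    qed
  qed
  define s where "s = sorted_list_of_set S"
  define c where "c = rev s"
  have mFc: "map F c = s" unfolding c_def s_def by (rule pal_set[OF finS cl rv])
  have mFs: "map F s = c"
  proof -
    have "map F s = rev (map F c)" unfolding c_def by (simp add: rev_map)
    then show ?thesis using mFc c_def by simp
  qed
  have ss: "sorted_wrt (<) s" unfolding s_def by (rule strict_sorted_list_of_set)
  have sets: "set s = S" unfolding s_def using finS by simp
  have lens: "length s = card S" unfolding s_def using finS by simp
  have Sb: "\<forall>x\<in>S. x < k^(l+2)"
  proof
    fix x assume "x \<in> S"
    then consider (A) a y where "a < k" "y \<in> B" "x = g a y (k-1-a)"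
      | (C) a where "a < k-1" "x = g (a+1) 0 (k-1-a)" using memS by blast
    then show "x < k^(l+2)"
    proof cases
      case A then show ?thesis unfolding Kpow g_def using g_bound[of a k y K "k-1-a"] fB k0 by simp
    next
      case C then show ?thesis unfolding Kpow g_def using g_bound[of "a+1" k 0 K "k-1-a"] K0 k0 by simp
    qed
  qed
  have "subseq s [0..<k^(l+2)]"
    by (rule sorted_subset_imp_subseq) (use sets Sb ss in auto)
  then have sub: "subseq c (Zprime k (l+2))"
    using subseq_map[of s "[0..<k^(l+2)]" F] mFs unfolding Zprime_def F_def by simp
  have "sorted_wrt (>) c" unfolding c_def using ss by (simp add: sorted_wrt_rev)
  moreover have "length c = k*d + k - 1" unfolding c_def using lens cardS by simp
  moreover have "palindromic k (l+2) c"
    unfolding palindromic_def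
  proof (intro allI impI)
    fix i assume i: "i < length c"
    have "rev_digits k (l+2) (c ! i) = map F c ! i" using i F_def by simp
    also have "... = rev c ! i" using mFc c_def by simp
    also have "... = c ! (length c - 1 - i)" using i by (simp add: rev_nth)
    finally show "rev_digits k (l+2) (c ! i) = c ! (length c - 1 - i)" .
  qed
  moreover have "0 \<notin> set c"
  proof
    assume "0 \<in> set c"
    then have "0 \<in> S" using sets c_def by simp
    then consider (A) a y where "a < k" "y \<in> B" "0 = g a y (k-1-a)"
      | (C) a where "a < k-1" "0 = g (a+1) 0 (k-1-a)" using memS by blast
    then show False
    proof cases
      case A
      have "0 < y*k" using fB[OF A(2)] k0 by simp
      moreover have "y*k \<le> (a*K+y)*k" by (rule mult_right_mono) simp_all
      ultimately show ?thesis using A(3) unfolding g_def by linarith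
    next
      case C then show ?thesis using K0 k0 unfolding g_def by simp
    qed
  qed
  ultimately show ?thesis using sub by blast
qed

end
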